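(* Let $p$ be a prime and let $c_1,c_2,\lambda\in\mathbf{Q}_p$ with $c_2\neq 0$ and $\lambda\neq 0$. Let $(a_n)_{n\ge 0}$ be the sequence $a_n=(c_1+c_2 n)\lambda^n$, and let $K$ be its Kepler set. Then $$K=\begin{cases}\lambda\left(1+\dfrac{c_2}{c_1}+\left(\dfrac{c_2}{c_1}\right)^2\mathbf{Z}_p\right), & |c_1|_p>|c_2|_p,\\[2mm] \mathbf{Q}_p\setminus \lambda\left(1+p\mathbf{Z}_p\right), & |c_1|_p\le |c_2|_p.\end{cases}$$
   Context: The Kepler set of a sequence $(a_n)_{n\ge0}$ in $\mathbf{Q}_p$ is the closure in $\mathbf{Q}_p$ of the set of consecutive ratios $\{a_{n+1}/a_n : n\ge 0,\ a_n\neq 0\}$. For $x\in\mathbf{Q}_p$ and a set $A\subseteq\mathbf{Q}_p$, $xA=\{xa:a\in A\}$ and $x+A=\{x+a:a\in A\}$. *)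

theory Defs
  imports Complex_Main "HOL-Computational_Algebra.Primes"
begin

definition padic_abs_rat :: "nat \<Rightarrow> rat \<Rightarrow> real" where
  "padic_abs_rat p q =
     (if q = 0 then 0
      else (let (a, b) = quotient_of q in
            real p powr (- (real (multiplicity (int p) a) - real (multiplicity (int p) b)))))"

text \<open>(F, N) is a model of Q_p: a field of characteristic 0 with a non-archimedean
  absolute value N extending the p-adic absolute value on Q, in which Q is dense and
  which is complete.  Such a pair is unique up to isometric field isomorphism
  (it is the completion of Q at p), so quantifying over all of them is the same as
  speaking about Q_p.\<close>
definition is_Qp :: "nat \<Rightarrow> ('a::field_char_0 \<Rightarrow> real) \<Rightarrow> bool" where
  "is_Qp p N \<longleftrightarrow>
     (\<forall>x. N x = 0 \<longleftrightarrow> x = 0) \<and>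
     (\<forall>x y. N (x * y) = N x * N y) \<and>
     (\<forall>x y. N (x + y) \<le> max (N x) (N y)) \<and>
     (\<forall>q. N (of_rat q) = padic_abs_rat p q) \<and>
     (\<forall>x e. e > 0 \<longrightarrow> (\<exists>q. N (x - of_rat q) < e)) \<and>
     (\<forall>X :: nat \<Rightarrow> 'a. (\<forall>e>0. \<exists>M. \<forall>m\<ge>M. \<forall>n\<ge>M. N (X m - X n) < e) \<longrightarrow>
        (\<exists>L. \<forall>e>0. \<exists>M. \<forall>n\<ge>M. N (X n - L) < e))"

definition Nclosure :: "('a::ab_group_add \<Rightarrow> real) \<Rightarrow> 'a set \<Rightarrow> 'a set" where
  "Nclosure N A = {x. \<forall>e>0. \<exists>a\<in>A. N (x - a) < e}"

definition kepler_set :: "('a::field \<Rightarrow> real) \<Rightarrow> (nat \<Rightarrow> 'a) \<Rightarrow> 'a set" where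
  "kepler_set N a = Nclosure N {a (Suc n) / a n | n. a n \<noteq> 0}"

definition Zp :: "('a \<Rightarrow> real) \<Rightarrow> 'a set" where
  "Zp N = {x. N x \<le> 1}"

end

theory Submission
  imports Defs "HOL-Number_Theory.Cong"
begin

lemma padic_abs_rat_nonneg: "padic_abs_rat p q \<ge> 0"
  unfolding padic_abs_rat_def by (auto split: prod.splits)

locale qpc =
  fixes p :: nat and N :: "'a::field_char_0 \<Rightarrow> real"
  assumes pr: "prime p" and Q: "is_Qp p N"
begin

lemma N_zero_iff: "N x = 0 \<longleftrightarrow> x = 0" using Q[unfolded is_Qp_def, THEN conjunct1] by (rule spec)
lemma N_mult: "N (x * y) = N x * N y" using Q[unfolded is_Qp_def, THEN conjunct2, THEN conjunct1] by (elim allE)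
lemma N_ultra: "N (x + y) \<le> max (N x) (N y)" using Q[unfolded is_Qp_def, THEN conjunct2, THEN conjunct2, THEN conjunct1] by (elim allE)
lemma N_of_rat: "N (of_rat q) = padic_abs_rat p q" using Q[unfolded is_Qp_def, THEN conjunct2, THEN conjunct2, THEN conjunct2, THEN conjunct1] by (elim allE)
lemma N_dense: "e > 0 \<Longrightarrow> \<exists>q. N (x - of_rat q) < e" using Q[unfolded is_Qp_def, THEN conjunct2, THEN conjunct2, THEN conjunct2, THEN conjunct2, THEN conjunct1] by (elim allE impE)

lemma N_0[simp]: "N 0 = 0" using N_zero_iff by simp
lemma N_1[simp]: "N 1 = 1"
proof -
  have "N 1 = N 1 * N 1" using N_mult[of 1 1] by simp
  moreover have "N 1 \<noteq> 0" using N_zero_iff by simp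
  ultimately show ?thesis by simp
qed
lemma N_m1: "N (-1) = 1"
proof -
  have "N (-1) * N (-1) = 1" using N_mult[of "-1" "-1"] by simp
  moreover have "N (-1) \<ge> 0" using N_of_rat[of "-1"] padic_abs_rat_nonneg[of p "-1"] by simp
  moreover have "N (-1) ^ 2 = 1" using calculation(1) by (simp add: power2_eq_square)
  then have "N (-1) = 1 \<or> N (-1) = -1" using power2_eq_1_iff by blast
  ultimately show ?thesis by linarith
qed
lemma N_minus[simp]: "N (- x) = N x"
  using N_mult[of "-1" x] N_m1 by simp
lemma N_nonneg[simp]: "N x \<ge> 0"
  using N_ultra[of x "-x"] by simp
lemma N_pos: "x \<noteq> 0 \<Longrightarrow> N x > 0"
  using N_nonneg[of x] N_zero_iff[of x] by linarith
lemma N_sym: "N (x - y) = N (y - x)"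
  using N_minus[of "x - y"] by simp
lemma N_divide: "N (x / y) = N x / N y"
proof (cases "y = 0")
  case False
  then have "N (x / y) * N y = N x" using N_mult[of "x/y" y] by simp
  then show ?thesis using N_pos[OF False] by (simp add: field_simps)
qed simp
lemma N_power: "N (x ^ n) = N x ^ n"
  by (induction n) (simp_all add: N_mult)
lemma N_strict: assumes "N a < N b" shows "N (a + b) = N b"
proof -
  have "N (a + b) \<le> N b" using N_ultra[of a b] assms by simp
  moreover have "N b \<le> max (N (a + b)) (N (-a))" using N_ultra[of "a+b" "-a"] by simp
  ultimately show ?thesis using assms by simp
qed
lemma N_diff_le: "N (x - z) \<le> max (N (x - y)) (N (y - z))"
  using N_ultra[of "x - y" "y - z"] by simp
lemma N_of_nat_le1: "N (of_nat n) \<le> 1"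
proof (induction n)
  case (Suc n) then show ?case using N_ultra[of 1 "of_nat n"] by simp
qed simp

lemma N_of_int: "N (of_int a) = (if a = 0 then 0 else real p powr (- real (multiplicity (int p) a)))"
proof -
  have "N (of_int a) = padic_abs_rat p (of_int a)" using N_of_rat[of "of_int a"] by simp
  then show ?thesis unfolding padic_abs_rat_def by (simp add: quotient_of_int)
qed
lemma p_gt1: "real p > 1" using pr prime_gt_1_nat by simp
lemma N_of_int_le1: "N (of_int a) \<le> 1"
proof -
  have "1 \<le> real p powr real (multiplicity (int p) a)" using p_gt1 by (intro ge_one_powr_ge_zero) auto
  then show ?thesis by (auto simp: N_of_int powr_minus inverse_le_1_iff)
qed
lemma N_of_int_1: "\<not> int p dvd a \<Longrightarrow> N (of_int a) = 1"
  using p_gt1 by (auto simp: N_of_int not_dvd_imp_multiplicity_0)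
lemma N_of_int_lt1: assumes "int p dvd a" "a \<noteq> 0" shows "N (of_int a) < 1"
proof -
  have pi: "prime (int p)" using pr by simp
  have nu: "\<not> is_unit (int p)" using not_prime_unit[of "int p"] pi by blast
  have "multiplicity (int p) a > 0" using multiplicity_gt_zero_iff[OF assms(2) nu] assms(1) by blast
  then have "1 < real p powr real (multiplicity (int p) a)" using p_gt1 by (intro gr_one_powr) auto
  moreover have "N (of_int a) = inverse (real p powr real (multiplicity (int p) a))"
    using assms(2) by (simp add: N_of_int powr_minus)
  ultimately show ?thesis by (simp add: inverse_less_1_iff)
qed
lemma N_p: "N (of_nat p) = 1 / real p"
proof -
  have m: "multiplicity (int p) (int p) = 1"
    using pr by (intro multiplicity_self) (auto simp: prime_gt_0_nat prime_nat_iff_prime)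
  have "N (of_nat p) = N (of_int (int p))" by simp
  also have "\<dots> = real p powr (-1)"
    using N_of_int[of "int p"] pr m by (simp add: prime_gt_0_nat)
  also have "\<dots> = 1 / real p" using p_gt1 by (simp add: powr_minus divide_inverse)
  finally show ?thesis .
qed

lemma N_ge1: assumes "N y > 1 / real p" shows "N y \<ge> 1"
proof -
  have pos: "N y > 0" using assms p_gt1 by (smt (verit) divide_pos_pos)
  obtain q where q: "N (y - of_rat q) < N y" using N_dense[OF pos] by blast
  have "N (- (y - of_rat q) + y) = N y" using N_strict[of "- (y - of_rat q)" y] q N_sym[of "of_rat q" y] by simp
  then have eq: "padic_abs_rat p q = N y" using N_of_rat[of q] by simp
  then have "q \<noteq> 0" using pos unfolding padic_abs_rat_def by auto
  obtain a b where ab: "quotient_of q = (a, b)" by fastforce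
  define k :: real where "k = real (multiplicity (int p) b) - real (multiplicity (int p) a)"
  have kint: "k \<in> \<int>" unfolding k_def by simp
  have "padic_abs_rat p q = real p powr k"
    using \<open>q \<noteq> 0\<close> ab unfolding padic_abs_rat_def k_def by simp
  moreover have "real p powr (-1) = 1 / real p" using p_gt1 by (simp add: powr_minus divide_inverse)
  ultimately have "real p powr k > real p powr (-1)"
    using eq assms by simp
  then have "k > -1" using p_gt1 powr_less_cancel_iff by blast
  then have "k \<ge> 0" using kint by (auto elim!: Ints_cases)
  then have "real p powr k \<ge> 1" using p_gt1 by (intro ge_one_powr_ge_zero) auto
  then show ?thesis using eq \<open>padic_abs_rat p q = real p powr k\<close> by simp
qed

lemma nat_dense: assumes x: "N x \<le> 1" and e: "e > 0" shows "\<exists>n. N (x - of_nat n) < e"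
proof -
  obtain q where q: "N (x - of_rat q) < min e 1" using N_dense[of "min e 1" x] e by auto
  have "N (of_rat q) \<le> 1"
    using N_ultra[of x "- (x - of_rat q)"] q x N_sym[of "of_rat q" x] by (simp add: max_def split: if_splits)
  obtain a b where ab: "quotient_of q = (a, b)" by fastforce
  have bpos: "b > 0" using ab quotient_of_denom_pos by blast
  have cop: "coprime a b" using ab quotient_of_coprime by blast
  have qeq: "(of_rat q :: 'a) = of_int a / of_int b"
    using quotient_of_div[OF ab] by (simp add: of_rat_divide)
  have pr': "prime (int p)" using pr by simp
  have ndvd: "\<not> int p dvd b"
  proof
    assume pb: "int p dvd b"
    have "\<not> int p dvd a"
    proof
      assume "int p dvd a"
      then have "is_unit (int p)" using coprime_common_divisor[OF cop _ pb] by blast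
      then show False using pr' by simp
    qed
    then have "N (of_int a) = 1" by (rule N_of_int_1)
    moreover have "N (of_int b) < 1" using N_of_int_lt1[OF pb] bpos by simp
    moreover have "N (of_int b) > 0" using N_pos[of "of_int b"] bpos by simp
    ultimately have "N (of_rat q) > 1" using qeq N_divide by simp
    then show False using \<open>N (of_rat q) \<le> 1\<close> by simp
  qed
  have Nb: "N (of_int b) = 1" using N_of_int_1[OF ndvd] .
  obtain k where k: "(1 / real p) ^ k < e" using real_arch_pow_inv[OF e, of "1 / real p"] p_gt1 by auto
  have "coprime b (int p)" using prime_imp_coprime[OF pr' ndvd] by (simp add: ac_simps)
  then have "coprime b (int p ^ k)" by simp
  then obtain u where u: "[b * u = 1] (mod (int p ^ k))" using cong_solve_coprime_int by blast
  define m where "m = (a * u) mod (int p ^ k)"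
  have m0: "m \<ge> 0" unfolding m_def using pr by (simp add: prime_gt_0_nat)
  have "[m = a * u] (mod (int p ^ k))" unfolding m_def by simp
  then have "[m * b = a * u * b] (mod (int p ^ k))" by (rule cong_scalar_right)
  moreover have "[a * u * b = a * 1] (mod (int p ^ k))"
    using cong_mult[OF cong_refl[of a] u] by (simp add: ac_simps)
  ultimately have "[m * b = a] (mod (int p ^ k))" using cong_trans by fastforce
  then have "int p ^ k dvd (a - m * b)" using cong_iff_dvd_diff cong_sym by blast
  then obtain c where c: "a - m * b = int p ^ k * c" by blast
  define n where "n = nat m"
  have nm: "(of_nat n :: 'a) = of_int m" unfolding n_def using m0 by simp
  have "(of_rat q :: 'a) - of_nat n = of_int (a - m * b) / of_int b"
    using qeq nm bpos by (simp add: field_simps)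
  then have "N (of_rat q - of_nat n) = N (of_int (int p ^ k * c))"
    using Nb c by (simp add: N_divide)
  also have "\<dots> = N (of_nat p) ^ k * N (of_int c)" by (simp add: N_mult N_power)
  also have "\<dots> \<le> (1 / real p) ^ k" using N_of_int_le1[of c] N_p
    by (simp add: mult_left_le)
  finally have "N (of_rat q - of_nat n) < e" using k by simp
  then have "N (x - of_nat n) < e" using N_diff_le[of x "of_nat n" "of_rat q"] q by (simp add: max_def split: if_splits)
  then show ?thesis by blast
qed

lemma Nclosure_eqI:
  assumes "R \<subseteq> S"
    and "\<And>x. (\<And>e. e > 0 \<Longrightarrow> \<exists>a\<in>S. N (x - a) < e) \<Longrightarrow> x \<in> S"
    and "\<And>s e. s \<in> S \<Longrightarrow> e > 0 \<Longrightarrow> \<exists>r\<in>R. N (s - r) < e"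
  shows "Nclosure N R = S"
proof
  show "Nclosure N R \<subseteq> S"
  proof
    fix x assume "x \<in> Nclosure N R"
    then have "\<forall>e>0. \<exists>a\<in>R. N (x - a) < e" unfolding Nclosure_def by blast
    then show "x \<in> S" using assms(1,2) by blast
  qed
  show "S \<subseteq> Nclosure N R" using assms(3) unfolding Nclosure_def by blast
qed

lemma ratio_set:
  fixes c1 c2 lam :: "'b::field_char_0"
  assumes "lam \<noteq> 0"
  shows "{(\<lambda>n. (c1 + c2 * of_nat n) * lam ^ n) (Suc n) / (\<lambda>n. (c1 + c2 * of_nat n) * lam ^ n) n | n.
           (\<lambda>n. (c1 + c2 * of_nat n) * lam ^ n) n \<noteq> 0}
       = {lam * (1 + c2 / (c1 + c2 * of_nat n)) | n. c1 + c2 * of_nat n \<noteq> 0}"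
proof -
  have "((c1 + c2 * of_nat (Suc n)) * lam ^ Suc n) / ((c1 + c2 * of_nat n) * lam ^ n)
        = lam * (1 + c2 / (c1 + c2 * of_nat n))" if "c1 + c2 * of_nat n \<noteq> 0" for n
  proof -
    have ln: "lam ^ n \<noteq> 0" using assms by simp
    have "((c1 + c2 * of_nat (Suc n)) * lam ^ Suc n) / ((c1 + c2 * of_nat n) * lam ^ n)
        = ((c1 + c2 * of_nat (Suc n)) * lam * lam ^ n) / ((c1 + c2 * of_nat n) * lam ^ n)"
      by (simp add: power_Suc ac_simps)
    also have "\<dots> = (c1 + c2 * of_nat (Suc n)) * lam / (c1 + c2 * of_nat n)"
      using ln by simp
    also have "\<dots> = lam * (1 + c2 / (c1 + c2 * of_nat n))"
      using that by (simp add: field_simps)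
    finally show ?thesis .
  qed
  note h = this
  have h2: "(c1 + c2 * of_nat n) * lam ^ n \<noteq> 0 \<longleftrightarrow> c1 + c2 * of_nat n \<noteq> 0" for n
    using assms by simp
  show ?thesis
  proof (intro set_eqI iffI)
    fix x assume "x \<in> {(\<lambda>n. (c1 + c2 * of_nat n) * lam ^ n) (Suc n) / (\<lambda>n. (c1 + c2 * of_nat n) * lam ^ n) n | n.
           (\<lambda>n. (c1 + c2 * of_nat n) * lam ^ n) n \<noteq> 0}"
    then obtain n where "x = ((c1 + c2 * of_nat (Suc n)) * lam ^ Suc n) / ((c1 + c2 * of_nat n) * lam ^ n)"
      "(c1 + c2 * of_nat n) * lam ^ n \<noteq> 0" by blast
    then show "x \<in> {lam * (1 + c2 / (c1 + c2 * of_nat n)) | n. c1 + c2 * of_nat n \<noteq> 0}"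
      using h h2 by blast
  next
    fix x assume "x \<in> {lam * (1 + c2 / (c1 + c2 * of_nat n)) | n. c1 + c2 * of_nat n \<noteq> 0}"
    then obtain n where "x = lam * (1 + c2 / (c1 + c2 * of_nat n))" "c1 + c2 * of_nat n \<noteq> 0" by blast
    then show "x \<in> {(\<lambda>n. (c1 + c2 * of_nat n) * lam ^ n) (Suc n) / (\<lambda>n. (c1 + c2 * of_nat n) * lam ^ n) n | n.
           (\<lambda>n. (c1 + c2 * of_nat n) * lam ^ n) n \<noteq> 0}"
      using h[of n] h2[of n] by (intro CollectI exI[of _ n] conjI) (simp_all only: \<open>x = _\<close>, simp_all)
  qed
qed

lemma N_one_plus: assumes "N y < 1" shows "N (1 + y) = 1"
  using N_strict[of y 1] assms by (simp add: add.commute)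

lemma caseA:
  assumes c: "N c1 > N c2" and c2: "c2 \<noteq> 0" and lam: "lam \<noteq> 0"
  shows "kepler_set N (\<lambda>n. (c1 + c2 * of_nat n) * lam ^ n) =
         (\<lambda>z. lam * (1 + c2 / c1 + (c2 / c1) ^ 2 * z)) ` Zp N"
proof -
  define t where "t = c2 / c1"
  have c1: "c1 \<noteq> 0"
  proof
    assume "c1 = 0" then show False using c N_nonneg[of c2] by simp
  qed
  have t0: "t \<noteq> 0" using c1 c2 unfolding t_def by simp
  have Nt: "N t < 1" using c c1 N_pos[OF c1] unfolding t_def by (simp add: N_divide)
  have c2t: "c2 = t * c1" using c1 unfolding t_def by simp
  have one: "N (1 + t * z) = 1" if "N z \<le> 1" for z
  proof -
    have "N (t * z) < 1" using Nt that N_nonneg[of t] N_nonneg[of z]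
    proof -
      have "N t * N z \<le> N t * 1" using mult_left_mono[OF that N_nonneg[of t]] .
      then show ?thesis using Nt by (simp add: N_mult)
    qed
    then show ?thesis by (rule N_one_plus)
  qed
  have one0: "1 + t * z \<noteq> 0" if "N z \<le> 1" for z
  proof
    assume "1 + t * z = 0"
    then show False using one[OF that] by simp
  qed
  have Nlt: "N (lam * t^2) > 0" using lam t0 N_pos by simp
  let ?S = "(\<lambda>z. lam * (1 + t + t ^ 2 * z)) ` Zp N"
  let ?R = "{lam * (1 + c2 / (c1 + c2 * of_nat n)) | n. c1 + c2 * of_nat n \<noteq> 0}"
  have "Nclosure N ?R = ?S"
  proof (rule Nclosure_eqI)
    show "?R \<subseteq> ?S"
    proof
      fix r assume "r \<in> ?R"
      then obtain n where r: "r = lam * (1 + c2 / (c1 + c2 * of_nat n))" by blast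
      have Nn: "N (of_nat n) \<le> 1" by (rule N_of_nat_le1)
      define z where "z = - of_nat n / (1 + t * of_nat n)"
      have "N z = N (of_nat n)" unfolding z_def using one[OF Nn] by (simp add: N_divide)
      then have zZ: "z \<in> Zp N" using Nn unfolding Zp_def by simp
      have d: "c1 + t * c1 * of_nat n = c1 * (1 + t * of_nat n)" by (simp add: algebra_simps)
      have "c2 / (c1 + c2 * of_nat n) = t / (1 + t * of_nat n)"
        unfolding c2t d using c1 by simp
      moreover have "1 + t / (1 + t * of_nat n) = 1 + t + t ^ 2 * z"
        unfolding z_def using one0[OF Nn] by (simp add: field_simps power2_eq_square)
      ultimately have "r = lam * (1 + t + t ^ 2 * z)" unfolding r by simp
      then show "r \<in> ?S" using zZ by blast
    qed
  next
    fix x assume H: "\<And>e. e > 0 \<Longrightarrow> \<exists>a\<in>?S. N (x - a) < e"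
    define z0 where "z0 = (x / lam - 1 - t) / t ^ 2"
    have xz: "x = lam * (1 + t + t ^ 2 * z0)" unfolding z0_def using lam t0 by (simp add: field_simps)
    obtain a where "a \<in> ?S" "N (x - a) < N (lam * t^2)" using H[OF Nlt] by blast
    then obtain z where z: "N z \<le> 1" and a: "a = lam * (1 + t + t ^ 2 * z)" unfolding Zp_def by blast
    have "x - a = (lam * t^2) * (z0 - z)" unfolding xz a by (simp add: algebra_simps)
    then have "N (lam * t^2) * N (z0 - z) < N (lam * t^2) * 1"
      using \<open>N (x - a) < _\<close> by (simp add: N_mult)
    then have "N (z0 - z) < 1" using Nlt by simp
    then have "N z0 \<le> 1" using N_ultra[of "z0 - z" z] z by (simp add: max_def split: if_splits)
    then show "x \<in> ?S" using xz unfolding Zp_def by blast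
  next
    fix s and e :: real assume "s \<in> ?S" "e > 0"
    then obtain z where z: "N z \<le> 1" and s: "s = lam * (1 + t + t ^ 2 * z)" unfolding Zp_def by blast
    define w where "w = - z / (1 + t * z)"
    have Nw: "N w \<le> 1" unfolding w_def using one[OF z] z by (simp add: N_divide)
    have B1: "1 + t * w = 1 / (1 + t * z)"
      unfolding w_def using one0[OF z] by (simp add: field_simps)
    have zw: "z = - w / (1 + t * w)"
      unfolding B1 unfolding w_def using one0[OF z] by simp
    obtain n where n: "N (w - of_nat n) < e / N (lam * t^2)"
      using nat_dense[OF Nw] \<open>e > 0\<close> Nlt by (meson divide_pos_pos)
    have Nn: "N (of_nat n) \<le> 1" by (rule N_of_nat_le1)
    have d: "c1 + t * c1 * of_nat n = c1 * (1 + t * of_nat n)" by (simp add: algebra_simps)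
    have nz: "c1 + c2 * of_nat n \<noteq> 0" unfolding c2t d using c1 one0[OF Nn] by simp
    have ct: "c2 / (c1 + c2 * of_nat n) = t / (1 + t * of_nat n)"
      unfolding c2t d using c1 by simp
    define r where "r = lam * (1 + c2 / (c1 + c2 * of_nat n))"
    have "r \<in> ?R" unfolding r_def using nz by blast
    have iden: "t + t^2 * (- w / (1 + t * w)) - t / (1 + t * of_nat n)
        = t^2 * (of_nat n - w) / ((1 + t * of_nat n) * (1 + t * w))"
      using one0[OF Nn] one0[OF Nw] by (simp add: field_simps power2_eq_square)
    have "s - r = lam * (t + t^2 * (- w / (1 + t * w)) - t / (1 + t * of_nat n))"
      unfolding s r_def ct zw[symmetric] by (simp add: algebra_simps)
    also have "\<dots> = (lam * t^2) * (of_nat n - w) / ((1 + t * of_nat n) * (1 + t * w))"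
      unfolding iden by simp
    finally have "s - r = (lam * t^2) * (of_nat n - w) / ((1 + t * of_nat n) * (1 + t * w))" .
    then have "N (s - r) = N (lam * t^2) * N (w - of_nat n)"
      using one[OF Nn] one[OF Nw] N_sym[of "of_nat n" w] by (simp add: N_divide N_mult)
    also have "\<dots> < e" using n Nlt by (simp add: pos_less_divide_eq mult.commute)
    finally show "\<exists>r\<in>?R. N (s - r) < e" using \<open>r \<in> ?R\<close> by blast
  qed
  then show ?thesis unfolding kepler_set_def ratio_set[OF lam] t_def by simp
qed
lemma caseB:
  assumes c: "N c1 \<le> N c2" and c2: "c2 \<noteq> 0" and lam: "lam \<noteq> 0"
  shows "kepler_set N (\<lambda>n. (c1 + c2 * of_nat n) * lam ^ n) =
         UNIV - (\<lambda>z. lam * (1 + of_nat p * z)) ` Zp N"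
proof -
  define s0 where "s0 = c1 / c2"
  have Ns0: "N s0 \<le> 1" using c N_pos[OF c2] unfolding s0_def by (simp add: N_divide)
  have c1s: "c1 = s0 * c2" using c2 unfolding s0_def by simp
  have dd: "c1 + c2 * of_nat n = (s0 + of_nat n) * c2" for n unfolding c1s by (simp add: algebra_simps)
  have Nlam: "N lam > 0" using N_pos[OF lam] .
  have p0: "(of_nat p :: 'a) \<noteq> 0" using p_gt1 by simp
  let ?S = "{x. N (x / lam - 1) \<ge> 1}"
  have Seq: "UNIV - (\<lambda>z. lam * (1 + of_nat p * z)) ` Zp N = ?S"
  proof (intro set_eqI iffI)
    fix x assume x: "x \<in> UNIV - (\<lambda>z. lam * (1 + of_nat p * z)) ` Zp N"
    define z where "z = (x / lam - 1) / of_nat p"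
    have xz: "x = lam * (1 + of_nat p * z)" unfolding z_def using lam p0 by (simp add: field_simps)
    have "z \<notin> Zp N" using x xz by blast
    then have "N z > 1" unfolding Zp_def by simp
    then have "N (x / lam - 1) > 1 / real p"
      unfolding z_def using p_gt1 by (simp add: N_divide N_p field_simps)
    then show "x \<in> ?S" using N_ge1 by simp
  next
    fix x assume x: "x \<in> ?S"
    have "x \<notin> (\<lambda>z. lam * (1 + of_nat p * z)) ` Zp N"
    proof
      assume "x \<in> (\<lambda>z. lam * (1 + of_nat p * z)) ` Zp N"
      then obtain z where z: "N z \<le> 1" "x = lam * (1 + of_nat p * z)" unfolding Zp_def by blast
      then have "x / lam - 1 = of_nat p * z" using lam by (simp add: field_simps)
      then have "N (x / lam - 1) = N z / real p" using N_p by (simp add: N_mult)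
      also have "\<dots> < 1" using z(1) p_gt1 by (simp add: field_simps)
      finally show False using x by simp
    qed
    then show "x \<in> UNIV - (\<lambda>z. lam * (1 + of_nat p * z)) ` Zp N" by simp
  qed
  let ?R = "{lam * (1 + c2 / (c1 + c2 * of_nat n)) | n. c1 + c2 * of_nat n \<noteq> 0}"
  have "Nclosure N ?R = ?S"
  proof (rule Nclosure_eqI)
    show "?R \<subseteq> ?S"
    proof
      fix r assume "r \<in> ?R"
      then obtain n where r: "r = lam * (1 + c2 / (c1 + c2 * of_nat n))" and nz: "c1 + c2 * of_nat n \<noteq> 0" by blast
      have m0: "s0 + of_nat n \<noteq> 0" using nz dd[of n] by auto
      have Nm: "N (s0 + of_nat n) \<le> 1" using N_ultra[of s0 "of_nat n"] Ns0 N_of_nat_le1[of n] by simp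
      have "c2 / (c1 + c2 * of_nat n) = 1 / (s0 + of_nat n)" unfolding dd using c2 by simp
      then have "r / lam - 1 = 1 / (s0 + of_nat n)" unfolding r using lam by simp
      then have "N (r / lam - 1) = 1 / N (s0 + of_nat n)" by (simp add: N_divide)
      also have "\<dots> \<ge> 1" using Nm N_pos[OF m0] by simp
      finally show "r \<in> ?S" by simp
    qed
  next
    fix x assume H: "\<And>e. e > 0 \<Longrightarrow> \<exists>a\<in>?S. N (x - a) < e"
    obtain y where y: "y \<in> ?S" "N (x - y) < N lam / 2" using H[of "N lam / 2"] Nlam by auto
    have e1: "x / lam - 1 = (x - y) / lam + (y / lam - 1)" using lam by (simp add: field_simps)
    have lt1: "N ((x - y) / lam) < N (y / lam - 1)"
    proof -
      have "N lam * 1 \<le> N lam * N (y / lam - 1)" using y(1) Nlam by (intro mult_left_mono) auto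
      then have "N lam \<le> N lam * N (y / lam - 1)" by simp
      then have "N (x - y) < N lam * N (y / lam - 1)" using y(2) Nlam by linarith
      then show ?thesis using Nlam by (simp add: N_divide pos_divide_less_eq mult.commute)
    qed
    have "N (x / lam - 1) = N (y / lam - 1)" unfolding e1 by (rule N_strict[OF lt1])
    then show "x \<in> ?S" using y by simp
  next
    fix x and e :: real assume x: "x \<in> ?S" and e: "e > 0"
    define u where "u = x / lam - 1"
    have Nu: "N u \<ge> 1" using x unfolding u_def by simp
    have u0: "u \<noteq> 0" using Nu by auto
    have Niu: "N (1 / u) = 1 / N u" by (simp add: N_divide)
    have Niu1: "N (1 / u) \<le> 1" using Niu Nu by simp
    have Niu0: "N (1 / u) > 0" using Niu Nu by simp
    define w where "w = 1 / u - s0"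
    have Nw: "N w \<le> 1" unfolding w_def using N_ultra[of "1/u" "- s0"] Niu1 Ns0 by simp
    define d where "d = min (N (1 / u) / 2) (e / (N lam * N u ^ 2))"
    have d0: "d > 0" unfolding d_def using Niu0 e Nlam Nu by simp
    obtain n where n: "N (w - of_nat n) < d" using nat_dense[OF Nw d0] by blast
    define m where "m = s0 + of_nat n"
    have e2: "m = - (w - of_nat n) + 1 / u" unfolding m_def w_def by simp
    have "N (w - of_nat n) < N (1 / u)" using n Niu0 unfolding d_def by linarith
    then have lt2: "N (- (w - of_nat n)) < N (1 / u)" by (simp only: N_minus)
    have Nm: "N m = N (1 / u)" unfolding e2 by (rule N_strict[OF lt2])
    then have m0: "m \<noteq> 0" using Niu0 by auto
    have nz: "c1 + c2 * of_nat n \<noteq> 0" using m0 c2 unfolding m_def dd by simp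
    define r where "r = lam * (1 + c2 / (c1 + c2 * of_nat n))"
    have "r \<in> ?R" unfolding r_def using nz by blast
    have xu: "x = lam * (1 + u)" unfolding u_def using lam by (simp add: field_simps)
    have "c2 / (c1 + c2 * of_nat n) = 1 / m" unfolding dd m_def using c2 by simp
    moreover have "lam * (1 + u) - lam * (1 + 1 / m) = lam * u * (m - 1 / u) / m"
      using u0 m0 by (simp add: field_simps)
    ultimately have "x - r = lam * u * (m - 1 / u) / m"
      unfolding r_def xu by simp
    also have "m - 1 / u = - (w - of_nat n)" unfolding m_def w_def by simp
    finally have "N (x - r) = N lam * N u * N (w - of_nat n) / N m"
      using N_sym[of "of_nat n" w] by (simp add: N_mult N_divide)
    also have "\<dots> = N lam * N u ^ 2 * N (w - of_nat n)"
      using Nm Niu Nu by (simp add: power2_eq_square)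
    also have "\<dots> < N lam * N u ^ 2 * d"
      using n Nlam Nu by simp
    also have "\<dots> \<le> N lam * N u ^ 2 * (e / (N lam * N u ^ 2))"
      unfolding d_def using Nlam Nu by (intro mult_left_mono) auto
    also have "\<dots> = e" using Nlam Nu by simp
    finally show "\<exists>r\<in>?R. N (x - r) < e" using \<open>r \<in> ?R\<close> by blast
  qed
  then show ?thesis unfolding kepler_set_def ratio_set[OF lam] Seq by simp
qed

theorem main:
  fixes c1 c2 lam :: 'a
  assumes "c2 \<noteq> 0" and "lam \<noteq> 0"
  shows "kepler_set N (\<lambda>n. (c1 + c2 * of_nat n) * lam ^ n) =
    (if N c1 > N c2
     then (\<lambda>z. lam * (1 + c2 / c1 + (c2 / c1) ^ 2 * z)) ` Zp N
     else UNIV - (\<lambda>z. lam * (1 + of_nat p * z)) ` Zp N)"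
  using caseA[OF _ assms] caseB[OF _ assms] by (cases "N c1 > N c2") auto
end

theorem theorem1:
  fixes p :: nat and N :: "'a::field_char_0 \<Rightarrow> real" and c1 c2 lam :: 'a
  assumes "prime p" and "is_Qp p N"
    and "c2 \<noteq> 0" and "lam \<noteq> 0"
  shows "kepler_set N (\<lambda>n. (c1 + c2 * of_nat n) * lam ^ n) =
    (if N c1 > N c2
     then (\<lambda>z. lam * (1 + c2 / c1 + (c2 / c1) ^ 2 * z)) ` Zp N
     else UNIV - (\<lambda>z. lam * (1 + of_nat p * z)) ` Zp N)"
proof -
  interpret qpc p N using assms(1,2) by unfold_locales
  show ?thesis using main[OF assms(3,4)] .
qed

end
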